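(* Let $(X,\to,d_A)$ be a metric transition system over $A$, let $d_0\in\mathit{DPMet}(X)$, and define $\beta_{d_0}\colon\mathit{DPMet}(\mathcal P(X))\to\mathit{DPMet}(\mathcal P(X))$ by $\beta_{d_0}(d)=\beta_T(d)\vee(d_0)_{\overrightarrow H}$. Then for all $X_1,X_2\subseteq X$, the least fixpoint satisfies: $\mu\beta_{d_0}(X_1,X_2)$ is the infimum of those $\varepsilon\in[0,1]$ such that for all $x_1\in X_1$, all $x_1'$ and all $\sigma\in A^*$ with $x_1\xrightarrow{\sigma}x_1'$ there exist $x_2\in X_2$, $x_2'$ and $\tau\in A^*$ with $x_2\xrightarrow{\tau}x_2'$, $d_{\mathrm{Tr}}(\sigma,\tau)\le\varepsilon$ and $d_0(x_1',x_2')\le\varepsilon$.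
   Context: A metric transition system over $A$ is $(X,\to,d_A)$ with $\to\subseteq X\times A\times X$ and a metric $d_A\colon A\times A\to[0,1]$; $x\xrightarrow{\sigma}x'$ denotes a path labelled $\sigma$. $r\oplus s=\min\{r+s,1\}$, $r\ominus s=\max\{0,r-s\}$; $\bigvee\emptyset=0$, $\bigwedge\emptyset=1$. $\mathit{DPMet}(Y)$: directed pseudo-metrics $d\colon Y\times Y\to[0,1]$ ($d(y,y)=0$, $d(x,z)\le d(x,y)\oplus d(y,z)$), ordered pointwise; least fixpoints are taken in this lattice. $d_{\overrightarrow H}(U,V)=\bigvee_{u\in U}\bigwedge_{v\in V}d(u,v)$. $d_{\mathrm{Tr}}(\sigma_1,\sigma_2)=1$ if lengths differ, $d_{\mathrm{Tr}}(\varepsilon,\varepsilon)=0$, $d_{\mathrm{Tr}}(a_1\sigma_1',a_2\sigma_2')=\max\{d_A(a_1,a_2),d_{\mathrm{Tr}}(\sigma_1',\sigma_2')\}$. $\bigcirc_af(x)=\bigvee\{(1-d_A(b,a))\land f(x')\mid x\xrightarrow{b}x'\}$; $\tilde f(Y)=\bigvee_{x\in Y}f(x)$; $\alpha_T(\mathcal F)(X_1,X_2)=\bigvee_{f\in\mathcal F}(\tilde f(X_1)\ominus\tilde f(X_2))$; $\gamma_T(d)=\{f\in[0,1]^X\mid\forall X_1,X_2\colon\tilde f(X_1)\ominus\tilde f(X_2)\le d(X_1,X_2)\}$; $\mathit{lo}_T(\mathcal F)=\bigcup_{a\in A}\{\bigcirc_af\mid f\in\mathrm{cl}^{\mathrm{sh}}(\mathcal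 F)\}\cup\{1\}$ with $\mathrm{cl}^{\mathrm{sh}}$ the closure under shifts $f\mapsto f\ominus c$, $f\mapsto f\oplus c$; $\beta_T=\alpha_T\circ\mathit{lo}_T\circ\gamma_T$. *)

theory Defs
  imports Main "HOL.Real"
begin

definition oplus01 :: "real \<Rightarrow> real \<Rightarrow> real" where
  "oplus01 r s = min (r + s) 1"

definition ominus01 :: "real \<Rightarrow> real \<Rightarrow> real" where
  "ominus01 r s = max 0 (r - s)"

definition sup01 :: "real set \<Rightarrow> real" where
  "sup01 S = (if S = {} then 0 else Sup S)"

definition inf01 :: "real set \<Rightarrow> real" where
  "inf01 S = (if S = {} then 1 else Inf S)"

definition metric01 :: "('a \<Rightarrow> 'a \<Rightarrow> real) \<Rightarrow> bool" where
  "metric01 d \<longleftrightarrow> (\<forall>a b. 0 \<le> d a b \<and> d a b \<le> 1) \<and> (\<forall>a b. d a b = 0 \<longleftrightarrow> a = b)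
     \<and> (\<forall>a b. d a b = d b a) \<and> (\<forall>a b c. d a c \<le> oplus01 (d a b) (d b c))"

definition DPMet :: "('y \<Rightarrow> 'y \<Rightarrow> real) set" where
  "DPMet = {d. (\<forall>x y. 0 \<le> d x y \<and> d x y \<le> 1) \<and> (\<forall>y. d y y = 0)
              \<and> (\<forall>x y z. d x z \<le> oplus01 (d x y) (d y z))}"

definition dp_lfp :: "(('y \<Rightarrow> 'y \<Rightarrow> real) \<Rightarrow> ('y \<Rightarrow> 'y \<Rightarrow> real)) \<Rightarrow> 'y \<Rightarrow> 'y \<Rightarrow> real" where
  "dp_lfp F = (THE d. d \<in> DPMet \<and> F d = d \<and> (\<forall>d'\<in>DPMet. F d' = d' \<longrightarrow> d \<le> d'))"

inductive tpath :: "('x \<times> 'a \<times> 'x) set \<Rightarrow> 'x \<Rightarrow> 'a list \<Rightarrow> 'x \<Rightarrow> bool" for T where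
  tpath_nil: "tpath T x [] x"
| tpath_cons: "(x, a, y) \<in> T \<Longrightarrow> tpath T y \<sigma> z \<Longrightarrow> tpath T x (a # \<sigma>) z"

fun dTr :: "('a \<Rightarrow> 'a \<Rightarrow> real) \<Rightarrow> 'a list \<Rightarrow> 'a list \<Rightarrow> real" where
  "dTr dA [] [] = 0"
| "dTr dA (a # s) (b # t) = (if length s \<noteq> length t then 1 else max (dA a b) (dTr dA s t))"
| "dTr dA [] (b # t) = 1"
| "dTr dA (a # s) [] = 1"

definition hausdorff_dir :: "('x \<Rightarrow> 'x \<Rightarrow> real) \<Rightarrow> 'x set \<Rightarrow> 'x set \<Rightarrow> real" where
  "hausdorff_dir d U V = sup01 ((\<lambda>u. inf01 ((\<lambda>v. d u v) ` V)) ` U)"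

definition ftilde :: "('x \<Rightarrow> real) \<Rightarrow> 'x set \<Rightarrow> real" where
  "ftilde f Y = sup01 (f ` Y)"

definition alphaT :: "('x \<Rightarrow> real) set \<Rightarrow> 'x set \<Rightarrow> 'x set \<Rightarrow> real" where
  "alphaT F X1 X2 = sup01 ((\<lambda>f. ominus01 (ftilde f X1) (ftilde f X2)) ` F)"

definition gammaT :: "('x set \<Rightarrow> 'x set \<Rightarrow> real) \<Rightarrow> ('x \<Rightarrow> real) set" where
  "gammaT d = {f. (\<forall>x. 0 \<le> f x \<and> f x \<le> 1)
      \<and> (\<forall>X1 X2. ominus01 (ftilde f X1) (ftilde f X2) \<le> d X1 X2)}"

inductive_set clsh :: "('x \<Rightarrow> real) set \<Rightarrow> ('x \<Rightarrow> real) set" for F where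
  clsh_base: "f \<in> F \<Longrightarrow> f \<in> clsh F"
| clsh_minus: "f \<in> clsh F \<Longrightarrow> 0 \<le> c \<Longrightarrow> c \<le> 1 \<Longrightarrow> (\<lambda>x. ominus01 (f x) c) \<in> clsh F"
| clsh_plus: "f \<in> clsh F \<Longrightarrow> 0 \<le> c \<Longrightarrow> c \<le> 1 \<Longrightarrow> (\<lambda>x. oplus01 (f x) c) \<in> clsh F"

definition nextop :: "('x \<times> 'a \<times> 'x) set \<Rightarrow> ('a \<Rightarrow> 'a \<Rightarrow> real) \<Rightarrow> 'a \<Rightarrow> ('x \<Rightarrow> real) \<Rightarrow> 'x \<Rightarrow> real" where
  "nextop T dA a f x = sup01 {min (1 - dA b a) (f x') | b x'. (x, b, x') \<in> T}"

definition loT :: "('x \<times> 'a \<times> 'x) set \<Rightarrow> ('a \<Rightarrow> 'a \<Rightarrow> real) \<Rightarrow> ('x \<Rightarrow> real) set \<Rightarrow> ('x \<Rightarrow> real) set" where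
  "loT T dA F = (\<Union>a. {nextop T dA a f | f. f \<in> clsh F}) \<union> {\<lambda>_. 1}"

definition betaT :: "('x \<times> 'a \<times> 'x) set \<Rightarrow> ('a \<Rightarrow> 'a \<Rightarrow> real) \<Rightarrow> ('x set \<Rightarrow> 'x set \<Rightarrow> real) \<Rightarrow> 'x set \<Rightarrow> 'x set \<Rightarrow> real" where
  "betaT T dA d = alphaT (loT T dA (gammaT d))"

definition beta_d0 :: "('x \<times> 'a \<times> 'x) set \<Rightarrow> ('a \<Rightarrow> 'a \<Rightarrow> real) \<Rightarrow> ('x \<Rightarrow> 'x \<Rightarrow> real)
    \<Rightarrow> ('x set \<Rightarrow> 'x set \<Rightarrow> real) \<Rightarrow> 'x set \<Rightarrow> 'x set \<Rightarrow> real" where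
  "beta_d0 T dA d0 d = (\<lambda>X1 X2. max (betaT T dA d X1 X2) (hausdorff_dir d0 X1 X2))"

end

theory Submission
  imports Defs
begin


lemma sup01_ub: assumes "x \<in> S" "\<forall>s\<in>S. s \<le> B" shows "x \<le> sup01 S"
  using assms unfolding sup01_def by (auto intro!: cSup_upper bdd_aboveI)

lemma sup01_le: assumes "\<forall>s\<in>S. s \<le> c" "0 \<le> c" shows "sup01 S \<le> c"
  using assms unfolding sup01_def by (auto intro!: cSup_least)

lemma sup01_ge0: assumes "\<forall>s\<in>S. 0 \<le> s \<and> s \<le> 1" shows "0 \<le> sup01 S"
proof (cases "S = {}")
  case True then show ?thesis by (simp add: sup01_def)
next
  case False then obtain x where "x \<in> S" by auto
  then have "x \<le> sup01 S" using assms by (intro sup01_ub[where B=1]) auto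
  then show ?thesis using assms \<open>x\<in>S\<close> by force
qed

lemma sup01_less: assumes "s < sup01 S" "0 \<le> s" shows "\<exists>x\<in>S. s < x"
proof -
  have "S \<noteq> {}" using assms by (auto simp: sup01_def)
  then show ?thesis using assms less_cSupD[of S s] by (auto simp: sup01_def)
qed

lemma sup01_single[simp]: "sup01 {x} = x" by (simp add: sup01_def)

lemma inf01_lb: assumes "x \<in> S" "\<forall>s\<in>S. 0 \<le> s" shows "inf01 S \<le> x"
  using assms unfolding inf01_def by (auto intro!: cInf_lower bdd_belowI)

lemma inf01_ge: assumes "\<forall>s\<in>S. c \<le> s" "c \<le> 1" shows "c \<le> inf01 S"
  using assms unfolding inf01_def by (auto intro!: cInf_greatest)

lemma inf01_less: assumes "inf01 S < c" "c \<le> 1" shows "\<exists>x\<in>S. x < c"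
proof -
  have "S \<noteq> {}" using assms by (auto simp: inf01_def)
  then show ?thesis using assms cInf_lessD[of S c] by (auto simp: inf01_def)
qed

lemma inf01_le1: assumes "\<forall>s\<in>S. 0 \<le> s \<and> s \<le> 1" shows "inf01 S \<le> 1"
proof (cases "S = {}")
  case True then show ?thesis by (simp add: inf01_def)
next
  case False then obtain x where "x \<in> S" by auto
  then have "inf01 S \<le> x" using assms by (intro inf01_lb) auto
  then show ?thesis using assms \<open>x\<in>S\<close> by force
qed

lemma ftilde_single[simp]: "ftilde f {y} = f y" by (simp add: ftilde_def)

lemma ftilde_ub: assumes "y \<in> Y" "\<forall>x. f x \<le> 1" shows "f y \<le> ftilde f Y"
  unfolding ftilde_def using assms by (intro sup01_ub[where B=1]) auto

lemma ftilde_le: assumes "\<forall>y\<in>Y. f y \<le> c" "0 \<le> c" shows "ftilde f Y \<le> c"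
  unfolding ftilde_def using assms by (intro sup01_le) auto

lemma ftilde_bnd: assumes "\<forall>x. 0 \<le> f x \<and> f x \<le> 1" shows "0 \<le> ftilde f Y \<and> ftilde f Y \<le> 1"
  unfolding ftilde_def using assms by (auto intro!: sup01_ge0 sup01_le)

lemma tpath_nil_inv: "tpath T x [] y \<Longrightarrow> y = x"
  by (auto elim: tpath.cases)

lemma tpath_cons_inv: "tpath T x (a # s) z \<Longrightarrow> \<exists>y. (x, a, y) \<in> T \<and> tpath T y s z"
  by (auto elim: tpath.cases)

lemma metric01D: assumes "metric01 dA"
  shows "0 \<le> dA a b" "dA a b \<le> 1" "dA a a = 0" "dA a b = dA b a" "dA a c \<le> dA a b + dA b c"
proof -
  have m: "\<forall>a b. 0 \<le> dA a b \<and> dA a b \<le> 1" "\<forall>a b. dA a b = 0 \<longleftrightarrow> a = b"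
    "\<forall>a b. dA a b = dA b a" "\<forall>a b c. dA a c \<le> oplus01 (dA a b) (dA b c)"
    using assms unfolding metric01_def by auto
  show "0 \<le> dA a b" "dA a b \<le> 1" "dA a a = 0" "dA a b = dA b a" using m by auto
  show "dA a c \<le> dA a b + dA b c" using m(4) unfolding oplus01_def by (meson min.boundedE)
qed

lemma dTr_len: "length s \<noteq> length t \<Longrightarrow> dTr dA s t = 1"
  by (induction dA s t rule: dTr.induct) auto

lemma dTr_bnd: assumes "metric01 dA" shows "0 \<le> dTr dA s t \<and> dTr dA s t \<le> 1"
proof (induction s arbitrary: t)
  case Nil then show ?case by (cases t) auto
next
  case (Cons a s) then show ?case using metric01D(1,2)[OF assms] by (cases t) (auto simp: le_max_iff_disj)
qed

lemma dTr_refl: assumes "metric01 dA" shows "dTr dA s s = 0"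
  by (induction s) (auto simp: metric01D[OF assms])

lemma dTr_tri: assumes "metric01 dA" shows "dTr dA s u \<le> dTr dA s t + dTr dA t u"
proof (cases "length s = length t \<and> length t = length u")
  case True
  then show ?thesis
  proof (induction s arbitrary: t u)
    case Nil then show ?case by auto
  next
    case (Cons a s)
    then obtain b t' c u' where tu: "t = b # t'" "u = c # u'"
      by (cases t; cases u) auto
    have "dTr dA s u' \<le> dTr dA s t' + dTr dA t' u'" using Cons tu by auto
    moreover have "dA a c \<le> dA a b + dA b c" by (rule metric01D(5)[OF assms])
    moreover have "0 \<le> dTr dA s t'" "0 \<le> dTr dA t' u'" "0 \<le> dA a b" "0 \<le> dA b c"
      using dTr_bnd[OF assms] metric01D[OF assms] by auto
    moreover have "dTr dA (a # s) u = max (dA a c) (dTr dA s u')"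
      "dTr dA (a # s) t = max (dA a b) (dTr dA s t')" "dTr dA t u = max (dA b c) (dTr dA t' u')"
      using Cons tu by auto
    ultimately show ?case by (smt (verit))
  qed
next
  case False
  then have "dTr dA s t = 1 \<or> dTr dA t u = 1" using dTr_len by metis
  then show ?thesis using dTr_bnd[OF assms, of s u] dTr_bnd[OF assms, of s t] dTr_bnd[OF assms, of t u] by auto
qed

lemma dTr_cons_le: assumes "dA a b \<le> e" "dTr dA s t \<le> e" shows "dTr dA (a # s) (b # t) \<le> e"
proof (cases "length s = length t")
  case True then show ?thesis using assms by auto
next
  case False then show ?thesis using assms dTr_len[OF False] by auto
qed

lemma dTr_cons_D: assumes "dTr dA (a # s) (b # t) \<le> e" "e < 1"
  shows "dA a b \<le> e \<and> dTr dA s t \<le> e"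
  using assms by (auto split: if_splits)

lemma dTr_nil_D: assumes "dTr dA [] t \<le> e" "e < 1" shows "t = []"
  using assms by (cases t) auto



definition good :: "('x \<times> 'a \<times> 'x) set \<Rightarrow> ('a \<Rightarrow> 'a \<Rightarrow> real) \<Rightarrow> ('x \<Rightarrow> 'x \<Rightarrow> real) \<Rightarrow> 'x set \<Rightarrow> 'x set \<Rightarrow> real \<Rightarrow> bool" where
  "good T dA d0 X1 X2 e \<longleftrightarrow> (\<forall>x1\<in>X1. \<forall>x1' \<sigma>. tpath T x1 \<sigma> x1' \<longrightarrow>
         (\<exists>x2\<in>X2. \<exists>x2' \<tau>. tpath T x2 \<tau> x2' \<and> dTr dA \<sigma> \<tau> \<le> e \<and> d0 x1' x2' \<le> e))"

definition delta :: "('x \<times> 'a \<times> 'x) set \<Rightarrow> ('a \<Rightarrow> 'a \<Rightarrow> real) \<Rightarrow> ('x \<Rightarrow> 'x \<Rightarrow> real) \<Rightarrow> 'x set \<Rightarrow> 'x set \<Rightarrow> real" where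
  "delta T dA d0 X1 X2 = inf01 {e. 0 \<le> e \<and> e \<le> 1 \<and> good T dA d0 X1 X2 e}"

lemma DPMetD: assumes "d \<in> DPMet"
  shows "0 \<le> d x y" "d x y \<le> 1" "d x x = 0" "d x z \<le> oplus01 (d x y) (d y z)" "d x z \<le> d x y + d y z"
  using assms unfolding DPMet_def oplus01_def by auto

context
  fixes T :: "('x \<times> 'a \<times> 'x) set" and dA :: "'a \<Rightarrow> 'a \<Rightarrow> real" and d0 :: "'x \<Rightarrow> 'x \<Rightarrow> real"
  assumes dA: "metric01 dA" and d0: "d0 \<in> DPMet"
begin

lemma good_mono: assumes "good T dA d0 X1 X2 e" "e \<le> e'" shows "good T dA d0 X1 X2 e'"
  unfolding good_def
proof (intro ballI allI impI)
  fix x1 x1' \<sigma> assume "x1 \<in> X1" "tpath T x1 \<sigma> x1'"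
  then obtain x2 x2' \<tau> where "x2 \<in> X2" "tpath T x2 \<tau> x2'" "dTr dA \<sigma> \<tau> \<le> e" "d0 x1' x2' \<le> e"
    using assms(1) unfolding good_def by blast
  then show "\<exists>x2\<in>X2. \<exists>x2' \<tau>. tpath T x2 \<tau> x2' \<and> dTr dA \<sigma> \<tau> \<le> e' \<and> d0 x1' x2' \<le> e'"
    using assms(2) by force
qed

lemma delta_bnd: "0 \<le> delta T dA d0 X1 X2 \<and> delta T dA d0 X1 X2 \<le> 1"
  unfolding delta_def by (auto intro!: inf01_ge inf01_le1)

lemma delta_le_good: "good T dA d0 X1 X2 e \<Longrightarrow> 0 \<le> e \<Longrightarrow> e \<le> 1 \<Longrightarrow> delta T dA d0 X1 X2 \<le> e"
  unfolding delta_def by (auto intro!: inf01_lb)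

lemma delta_lt: assumes "delta T dA d0 X1 X2 < e" "e \<le> 1" shows "good T dA d0 X1 X2 e"
proof -
  obtain e' where "e' \<in> {e. 0 \<le> e \<and> e \<le> 1 \<and> good T dA d0 X1 X2 e}" "e' < e"
    using inf01_less[OF assms[unfolded delta_def]] by auto
  then show ?thesis using good_mono by auto
qed

lemma delta_ge: assumes "\<And>e. 0 \<le> e \<Longrightarrow> e \<le> 1 \<Longrightarrow> good T dA d0 X1 X2 e \<Longrightarrow> c \<le> e" "c \<le> 1"
  shows "c \<le> delta T dA d0 X1 X2"
  unfolding delta_def using assms by (auto intro!: inf01_ge)

lemma delta_le: assumes "\<And>e. m < e \<Longrightarrow> e \<le> 1 \<Longrightarrow> good T dA d0 X1 X2 e" "0 \<le> m"
  shows "delta T dA d0 X1 X2 \<le> m"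
proof (cases "m < 1")
  case False then show ?thesis using delta_bnd[of X1 X2] by auto
next
  case True
  show ?thesis
  proof (rule ccontr)
    assume "\<not> ?thesis"
    then have lt: "m < delta T dA d0 X1 X2" by auto
    have "delta T dA d0 X1 X2 \<le> 1" using delta_bnd by auto
    define e where "e = (m + delta T dA d0 X1 X2) / 2"
    have "m < e" "e \<le> 1" "e < delta T dA d0 X1 X2" using lt True \<open>delta T dA d0 X1 X2 \<le> 1\<close> by (auto simp: e_def)
    then have "good T dA d0 X1 X2 e" using assms by auto
    then have "delta T dA d0 X1 X2 \<le> e" using \<open>m < e\<close> \<open>e \<le> 1\<close> assms(2) by (intro delta_le_good) auto
    then show False using \<open>e < delta T dA d0 X1 X2\<close> by auto
  qed
qed

lemma good_sub: assumes "X \<subseteq> W" shows "good T dA d0 X W 0"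
  unfolding good_def
proof (intro ballI allI impI)
  fix x1 x1' \<sigma> assume "x1 \<in> X" "tpath T x1 \<sigma> x1'"
  moreover have "dTr dA \<sigma> \<sigma> \<le> 0" "d0 x1' x1' \<le> 0" using dTr_refl[OF dA] DPMetD(3)[OF d0] by auto
  ultimately show "\<exists>x2\<in>W. \<exists>x2' \<tau>. tpath T x2 \<tau> x2' \<and> dTr dA \<sigma> \<tau> \<le> 0 \<and> d0 x1' x2' \<le> 0"
    using assms by (intro bexI[of _ x1] exI[of _ x1'] exI[of _ \<sigma>]) auto
qed

lemma good_refl: "good T dA d0 X X 0"
  using good_sub by simp

lemma delta_sub0: assumes "X \<subseteq> W" shows "delta T dA d0 X W = 0"
proof -
  have "delta T dA d0 X W \<le> 0" by (rule delta_le_good[OF good_sub[OF assms]]) auto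
  then show ?thesis using delta_bnd[of X W] by linarith
qed

lemma good_trans: assumes "good T dA d0 X Y e1" "good T dA d0 Y Z e2"
  shows "good T dA d0 X Z (e1 + e2)"
  unfolding good_def
proof (intro ballI allI impI)
  fix x1 x1' \<sigma> assume "x1 \<in> X" "tpath T x1 \<sigma> x1'"
  then obtain y y' \<rho> where y: "y \<in> Y" "tpath T y \<rho> y'" "dTr dA \<sigma> \<rho> \<le> e1" "d0 x1' y' \<le> e1"
    using assms(1) unfolding good_def by blast
  then obtain z z' \<tau> where z: "z \<in> Z" "tpath T z \<tau> z'" "dTr dA \<rho> \<tau> \<le> e2" "d0 y' z' \<le> e2"
    using assms(2) unfolding good_def by blast
  have "dTr dA \<sigma> \<tau> \<le> e1 + e2" using dTr_tri[OF dA, of \<sigma> \<tau> \<rho>] y z by auto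
  moreover have "d0 x1' z' \<le> e1 + e2" using DPMetD(5)[OF d0, of x1' z' y'] y z by auto
  ultimately show "\<exists>x2\<in>Z. \<exists>x2' \<tau>. tpath T x2 \<tau> x2' \<and> dTr dA \<sigma> \<tau> \<le> e1 + e2 \<and> d0 x1' x2' \<le> e1 + e2"
    using z by blast
qed

lemma delta_DPMet: "delta T dA d0 \<in> DPMet"
  unfolding DPMet_def
proof (intro CollectI conjI allI)
  fix x y show "0 \<le> delta T dA d0 x y" "delta T dA d0 x y \<le> 1" using delta_bnd by auto
next
  fix y show "delta T dA d0 y y = 0" using delta_sub0 by simp
next
  fix X Y Z
  let ?a = "delta T dA d0 X Y" and ?b = "delta T dA d0 Y Z"
  show "delta T dA d0 X Z \<le> oplus01 ?a ?b"
  proof (cases "?a + ?b < 1")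
    case False then show ?thesis using delta_bnd[of X Z] by (auto simp: oplus01_def)
  next
    case True
    have "delta T dA d0 X Z \<le> ?a + ?b"
    proof (rule delta_le)
      fix e assume e: "?a + ?b < e" "e \<le> 1"
      define e1 where "e1 = ?a + (e - ?a - ?b) / 2"
      define e2 where "e2 = ?b + (e - ?a - ?b) / 2"
      have b: "0 \<le> ?a" "?a \<le> 1" "0 \<le> ?b" "?b \<le> 1" using delta_bnd[of X Y] delta_bnd[of Y Z] by auto
      have "?a < e1" using e b unfolding e1_def by (simp add: field_simps)
      moreover have "?b < e2" using e b unfolding e2_def by (simp add: field_simps)
      moreover have "e1 \<le> 1" using e b unfolding e1_def by (simp add: field_simps)
      moreover have "e2 \<le> 1" using e b unfolding e2_def by (simp add: field_simps)
      moreover have "e1 + e2 = e" unfolding e1_def e2_def by simp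
      ultimately have "good T dA d0 X Y e1" "good T dA d0 Y Z e2" using delta_lt by auto
      from good_trans[OF this] show "good T dA d0 X Z e" using \<open>e1 + e2 = e\<close> by simp
    next
      show "0 \<le> ?a + ?b" using delta_bnd[of X Y] delta_bnd[of Y Z] by auto
    qed
    then show ?thesis using True by (simp add: oplus01_def)
  qed
qed

lemma delta_decomp: "delta T dA d0 X W = sup01 ((\<lambda>z. delta T dA d0 {z} W) ` X)"
proof (rule antisym)
  let ?R = "sup01 ((\<lambda>z. delta T dA d0 {z} W) ` X)"
  have bnd: "\<forall>s\<in>(\<lambda>z. delta T dA d0 {z} W) ` X. 0 \<le> s \<and> s \<le> 1" using delta_bnd by auto
  show "delta T dA d0 X W \<le> ?R"
  proof (rule delta_le)
    fix e assume e: "?R < e" "e \<le> 1"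
    have "\<forall>z\<in>X. good T dA d0 {z} W e"
    proof
      fix z assume "z \<in> X"
      then have "delta T dA d0 {z} W \<le> ?R" using bnd by (intro sup01_ub[where B=1]) auto
      then show "good T dA d0 {z} W e" using e by (intro delta_lt) auto
    qed
    then show "good T dA d0 X W e" unfolding good_def by blast
  next
    show "0 \<le> ?R" using sup01_ge0[OF bnd] .
  qed
  show "?R \<le> delta T dA d0 X W"
  proof (rule sup01_le)
    show "0 \<le> delta T dA d0 X W" using delta_bnd by auto
    show "\<forall>s\<in>(\<lambda>z. delta T dA d0 {z} W) ` X. s \<le> delta T dA d0 X W"
    proof
      fix s assume "s \<in> (\<lambda>z. delta T dA d0 {z} W) ` X"
      then obtain z where z: "z \<in> X" "s = delta T dA d0 {z} W" by auto
      show "s \<le> delta T dA d0 X W"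
      proof (rule delta_ge)
        fix e assume "0 \<le> e" "e \<le> 1" "good T dA d0 X W e"
        then have "good T dA d0 {z} W e" using z unfolding good_def by auto
        then show "s \<le> e" using z delta_le_good \<open>0 \<le> e\<close> \<open>e \<le> 1\<close> by auto
      next
        show "s \<le> 1" using z delta_bnd by auto
      qed
    qed
  qed
qed

end


lemma clsh_bnd: assumes "f \<in> clsh F" "\<forall>g\<in>F. \<forall>x. 0 \<le> g x \<and> g x \<le> 1" shows "\<forall>x. 0 \<le> f x \<and> f x \<le> 1"
  using assms(1)
proof (induction rule: clsh.induct)
  case (clsh_base f) then show ?case using assms(2) by auto
next
  case (clsh_minus f c)
  show ?case
  proof
    fix x have "0 \<le> f x" "f x \<le> 1" using clsh_minus.IH by auto
    then show "0 \<le> ominus01 (f x) c \<and> ominus01 (f x) c \<le> 1" using clsh_minus.hyps by (simp add: ominus01_def)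
  qed
next
  case (clsh_plus f c)
  show ?case
  proof
    fix x have "0 \<le> f x" "f x \<le> 1" using clsh_plus.IH by auto
    then show "0 \<le> oplus01 (f x) c \<and> oplus01 (f x) c \<le> 1" using clsh_plus.hyps by (simp add: oplus01_def)
  qed
qed

lemma gammaT_bnd: "\<forall>g\<in>gammaT d. \<forall>x. 0 \<le> g x \<and> g x \<le> 1"
  unfolding gammaT_def by auto

lemma ominus_bnd: "0 \<le> x \<Longrightarrow> x \<le> 1 \<Longrightarrow> 0 \<le> y \<Longrightarrow> 0 \<le> ominus01 x y \<and> ominus01 x y \<le> 1"
  by (auto simp: ominus01_def)

lemma alphaT_ub: assumes "f \<in> F" "\<forall>f\<in>F. \<forall>x. 0 \<le> f x \<and> f x \<le> 1"
  shows "ominus01 (ftilde f X1) (ftilde f X2) \<le> alphaT F X1 X2"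
  unfolding alphaT_def
proof (rule sup01_ub[where B=1])
  show "ominus01 (ftilde f X1) (ftilde f X2) \<in> (\<lambda>f. ominus01 (ftilde f X1) (ftilde f X2)) ` F" using assms by auto
  show "\<forall>s\<in>(\<lambda>f. ominus01 (ftilde f X1) (ftilde f X2)) ` F. s \<le> 1"
  proof
    fix s assume "s \<in> (\<lambda>f. ominus01 (ftilde f X1) (ftilde f X2)) ` F"
    then obtain f' where f': "f' \<in> F" "s = ominus01 (ftilde f' X1) (ftilde f' X2)" by blast
    have "0 \<le> ftilde f' X1 \<and> ftilde f' X1 \<le> 1" "0 \<le> ftilde f' X2 \<and> ftilde f' X2 \<le> 1"
      using f'(1) assms(2) by (simp_all add: ftilde_bnd)
    then show "s \<le> 1" using f'(2) by (simp add: ominus01_def)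
  qed
qed

lemma alphaT_le: assumes "\<forall>f\<in>F. ominus01 (ftilde f X1) (ftilde f X2) \<le> c" "0 \<le> c"
  shows "alphaT F X1 X2 \<le> c"
  unfolding alphaT_def using assms by (intro sup01_le) auto

lemma alphaT_bnd: assumes "\<forall>f\<in>F. \<forall>x. 0 \<le> f x \<and> f x \<le> 1"
  shows "0 \<le> alphaT F X1 X2 \<and> alphaT F X1 X2 \<le> 1"
  unfolding alphaT_def
proof
  have "\<forall>s\<in>(\<lambda>f. ominus01 (ftilde f X1) (ftilde f X2)) ` F. 0 \<le> s \<and> s \<le> 1"
  proof
    fix s assume "s \<in> (\<lambda>f. ominus01 (ftilde f X1) (ftilde f X2)) ` F"
    then obtain f' where f': "f' \<in> F" "s = ominus01 (ftilde f' X1) (ftilde f' X2)" by blast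
    have "0 \<le> ftilde f' X1 \<and> ftilde f' X1 \<le> 1" "0 \<le> ftilde f' X2 \<and> ftilde f' X2 \<le> 1"
      using f'(1) assms by (simp_all add: ftilde_bnd)
    then show "0 \<le> s \<and> s \<le> 1" using f'(2) by (simp add: ominus01_def)
  qed
  then show "0 \<le> sup01 ((\<lambda>f. ominus01 (ftilde f X1) (ftilde f X2)) ` F)"
    "sup01 ((\<lambda>f. ominus01 (ftilde f X1) (ftilde f X2)) ` F) \<le> 1"
    by (auto intro!: sup01_ge0 sup01_le)
qed

context
  fixes T :: "('x \<times> 'a \<times> 'x) set" and dA :: "'a \<Rightarrow> 'a \<Rightarrow> real" and d0 :: "'x \<Rightarrow> 'x \<Rightarrow> real"
  assumes dA: "metric01 dA" and d0: "d0 \<in> DPMet"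
begin

lemma nextop_bnd: assumes "\<forall>x. 0 \<le> h x \<and> h x \<le> 1"
  shows "0 \<le> nextop T dA a h x \<and> nextop T dA a h x \<le> 1"
proof -
  have "\<forall>s\<in>{min (1 - dA b a) (h x') | b x'. (x, b, x') \<in> T}. 0 \<le> s \<and> s \<le> 1"
  proof
    fix s assume "s \<in> {min (1 - dA b a) (h x') | b x'. (x, b, x') \<in> T}"
    then obtain b x' where "s = min (1 - dA b a) (h x')" by blast
    then show "0 \<le> s \<and> s \<le> 1" using assms metric01D(1,2)[OF dA, of b a] by (simp add: min_def)
  qed
  then show ?thesis unfolding nextop_def by (auto intro!: sup01_ge0 sup01_le)
qed

lemma loT_bnd: "\<forall>f\<in>loT T dA (gammaT d). \<forall>x. 0 \<le> f x \<and> f x \<le> 1"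
proof
  fix f assume "f \<in> loT T dA (gammaT d)"
  then have "f = (\<lambda>_. 1) \<or> (\<exists>a h. f = nextop T dA a h \<and> h \<in> clsh (gammaT d))"
    unfolding loT_def by auto
  then show "\<forall>x. 0 \<le> f x \<and> f x \<le> 1"
  proof
    assume "f = (\<lambda>_. 1)" then show ?thesis by simp
  next
    assume "\<exists>a h. f = nextop T dA a h \<and> h \<in> clsh (gammaT d)"
    then obtain a h where ah: "f = nextop T dA a h" "h \<in> clsh (gammaT d)" by blast
    have "\<forall>x. 0 \<le> h x \<and> h x \<le> 1" by (rule clsh_bnd[OF ah(2) gammaT_bnd])
    then show ?thesis using ah(1) nextop_bnd by simp
  qed
qed

lemma inf01_d0_bnd: "0 \<le> inf01 ((\<lambda>v. d0 u v) ` V) \<and> inf01 ((\<lambda>v. d0 u v) ` V) \<le> 1"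
  using DPMetD(1,2)[OF d0] by (auto intro!: inf01_ge inf01_le1)

lemma haus_ub: "u \<in> U \<Longrightarrow> inf01 ((\<lambda>v. d0 u v) ` V) \<le> hausdorff_dir d0 U V"
  unfolding hausdorff_dir_def using inf01_d0_bnd by (intro sup01_ub[where B=1]) auto

lemma haus_bnd: "0 \<le> hausdorff_dir d0 U V \<and> hausdorff_dir d0 U V \<le> 1"
  unfolding hausdorff_dir_def using inf01_d0_bnd by (auto intro!: sup01_ge0 sup01_le)

lemma haus_single: "hausdorff_dir d0 {u} V = inf01 ((\<lambda>v. d0 u v) ` V)"
  unfolding hausdorff_dir_def by simp

lemma beta_bnd: "0 \<le> beta_d0 T dA d0 d X W \<and> beta_d0 T dA d0 d X W \<le> 1"
proof -
  have "0 \<le> alphaT (loT T dA (gammaT d)) X W \<and> alphaT (loT T dA (gammaT d)) X W \<le> 1"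
    by (rule alphaT_bnd[OF loT_bnd])
  moreover have "0 \<le> hausdorff_dir d0 X W \<and> hausdorff_dir d0 X W \<le> 1" by (rule haus_bnd)
  ultimately show ?thesis unfolding beta_d0_def betaT_def by (simp add: le_max_iff_disj)
qed

lemma beta_decomp: "beta_d0 T dA d0 d X W = sup01 ((\<lambda>z. beta_d0 T dA d0 d {z} W) ` X)"
proof (rule antisym)
  let ?B = "beta_d0 T dA d0 d"
  let ?F = "loT T dA (gammaT d)"
  have Fb: "\<forall>f\<in>?F. \<forall>x. 0 \<le> f x \<and> f x \<le> 1" by (rule loT_bnd)
  have Bb: "\<And>X W. 0 \<le> ?B X W \<and> ?B X W \<le> 1" using beta_bnd by blast
  let ?R = "sup01 ((\<lambda>z. ?B {z} W) ` X)"
  have Rb: "0 \<le> ?R" using Bb by (intro sup01_ge0) auto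
  have zR: "?B {z} W \<le> ?R" if "z \<in> X" for z using that Bb by (intro sup01_ub[where B=1]) auto
  show "?B X W \<le> ?R"
  proof -
    have "alphaT ?F X W \<le> ?R"
    proof (rule alphaT_le[OF _ Rb])
      show "\<forall>f\<in>?F. ominus01 (ftilde f X) (ftilde f W) \<le> ?R"
      proof
        fix f assume f: "f \<in> ?F"
        have "ftilde f X \<le> ?R + ftilde f W"
        proof (rule ftilde_le)
          have "\<forall>x. 0 \<le> f x \<and> f x \<le> 1" using f Fb by blast
          then have "0 \<le> ftilde f W" using ftilde_bnd by blast
          then show "0 \<le> ?R + ftilde f W" using Rb by simp
          show "\<forall>z\<in>X. f z \<le> ?R + ftilde f W"
          proof
            fix z assume z: "z \<in> X"
            have "ominus01 (ftilde f {z}) (ftilde f W) \<le> alphaT ?F {z} W" by (rule alphaT_ub[OF f Fb])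
            also have "\<dots> \<le> ?B {z} W" unfolding beta_d0_def betaT_def by simp
            also have "\<dots> \<le> ?R" using zR z .
            finally show "f z \<le> ?R + ftilde f W" unfolding ominus01_def by simp
          qed
        qed
        then show "ominus01 (ftilde f X) (ftilde f W) \<le> ?R" using Rb unfolding ominus01_def by simp
      qed
    qed
    moreover have "hausdorff_dir d0 X W \<le> ?R"
      unfolding hausdorff_dir_def
    proof (rule sup01_le[OF _ Rb])
      show "\<forall>s\<in>(\<lambda>u. inf01 ((\<lambda>v. d0 u v) ` W)) ` X. s \<le> ?R"
      proof
        fix s assume "s \<in> (\<lambda>u. inf01 ((\<lambda>v. d0 u v) ` W)) ` X"
        then obtain u where u: "u \<in> X" "s = inf01 ((\<lambda>v. d0 u v) ` W)" by auto
        have "s = hausdorff_dir d0 {u} W" using u haus_single by simp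
        also have "\<dots> \<le> ?B {u} W" unfolding beta_d0_def by simp
        also have "\<dots> \<le> ?R" using zR u by simp
        finally show "s \<le> ?R" .
      qed
    qed
    ultimately show ?thesis unfolding beta_d0_def betaT_def by simp
  qed
  show "?R \<le> ?B X W"
  proof (rule sup01_le)
    show "0 \<le> ?B X W" using Bb by simp
    show "\<forall>s\<in>(\<lambda>z. ?B {z} W) ` X. s \<le> ?B X W"
    proof
      fix s assume "s \<in> (\<lambda>z. ?B {z} W) ` X"
      then obtain z where z: "z \<in> X" "s = ?B {z} W" by auto
      have "alphaT ?F {z} W \<le> alphaT ?F X W"
      proof (rule alphaT_le)
        show "0 \<le> alphaT ?F X W" using alphaT_bnd[OF Fb] by auto
        show "\<forall>f\<in>?F. ominus01 (ftilde f {z}) (ftilde f W) \<le> alphaT ?F X W"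
        proof
          fix f assume f: "f \<in> ?F"
          have "f z \<le> ftilde f X" using z f Fb by (intro ftilde_ub) auto
          then have "ominus01 (ftilde f {z}) (ftilde f W) \<le> ominus01 (ftilde f X) (ftilde f W)"
            unfolding ominus01_def by auto
          also have "\<dots> \<le> alphaT ?F X W" by (rule alphaT_ub[OF f Fb])
          finally show "ominus01 (ftilde f {z}) (ftilde f W) \<le> alphaT ?F X W" .
        qed
      qed
      moreover have "hausdorff_dir d0 {z} W \<le> hausdorff_dir d0 X W"
        using haus_single haus_ub z by simp
      ultimately show "s \<le> ?B X W" using z unfolding beta_d0_def betaT_def by auto
    qed
  qed
qed

lemma beta_sub0: assumes "X \<subseteq> W" shows "beta_d0 T dA d0 d X W = 0"
proof -
  let ?F = "loT T dA (gammaT d)"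
  have Fb: "\<forall>f\<in>?F. \<forall>x. 0 \<le> f x \<and> f x \<le> 1" by (rule loT_bnd)
  have "alphaT ?F X W \<le> 0"
  proof (rule alphaT_le)
    show "\<forall>f\<in>?F. ominus01 (ftilde f X) (ftilde f W) \<le> 0"
    proof
      fix f assume f: "f \<in> ?F"
      have "ftilde f X \<le> ftilde f W"
      proof (rule ftilde_le)
        have "\<forall>x. 0 \<le> f x \<and> f x \<le> 1" using f Fb by blast
        then show "0 \<le> ftilde f W" using ftilde_bnd by blast
        show "\<forall>y\<in>X. f y \<le> ftilde f W" using assms f Fb by (auto intro!: ftilde_ub)
      qed
      then show "ominus01 (ftilde f X) (ftilde f W) \<le> 0" unfolding ominus01_def by auto
    qed
  qed simp
  moreover have "hausdorff_dir d0 X W \<le> 0"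
    unfolding hausdorff_dir_def
  proof (rule sup01_le)
    show "\<forall>s\<in>(\<lambda>u. inf01 ((\<lambda>v. d0 u v) ` W)) ` X. s \<le> 0"
    proof
      fix s assume "s \<in> (\<lambda>u. inf01 ((\<lambda>v. d0 u v) ` W)) ` X"
      then obtain u where u: "u \<in> X" "s = inf01 ((\<lambda>v. d0 u v) ` W)" by auto
      have "s \<le> d0 u u" unfolding u(2) using u(1) assms DPMetD(1)[OF d0] by (intro inf01_lb) auto
      then show "s \<le> 0" using DPMetD(3)[OF d0] by simp
    qed
  qed simp
  ultimately show ?thesis using beta_bnd[of d X W] unfolding beta_d0_def betaT_def by auto
qed

lemma keyL:
  assumes d: "d \<in> DPMet" and dec: "\<And>X W. d X W = sup01 ((\<lambda>z. d {z} W) ` X)"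
    and sub0: "\<And>X W. X \<subseteq> W \<Longrightarrow> d X W = 0"
    and x1: "x1 \<in> X1" and tr: "(x1, a, y) \<in> T" and e: "0 < e" "e \<le> 1"
  shows "min e (d {y} {y2. \<exists>x2\<in>X2. \<exists>b. (x2, b, y2) \<in> T \<and> dA b a < e}) \<le> betaT T dA d X1 X2"
proof -
  define W where "W = {y2. \<exists>x2\<in>X2. \<exists>b. (x2, b, y2) \<in> T \<and> dA b a < e}"
  define f where "f = (\<lambda>z. d {z} W)"
  have fX: "ftilde f X = d X W" for X unfolding ftilde_def f_def using dec[of X W] by simp
  have fg: "f \<in> gammaT d"
    unfolding gammaT_def
  proof (intro CollectI conjI allI)
    fix x show "0 \<le> f x" "f x \<le> 1" using DPMetD[OF d] f_def by auto
  next
    fix Y1 Y2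
    have "d Y1 W \<le> oplus01 (d Y1 Y2) (d Y2 W)" by (rule DPMetD(4)[OF d])
    then show "ominus01 (ftilde f Y1) (ftilde f Y2) \<le> d Y1 Y2"
      unfolding fX ominus01_def oplus01_def using DPMetD(1)[OF d, of Y1 Y2] by auto
  qed
  define h where "h = (\<lambda>x. oplus01 (f x) (1 - e))"
  have hc: "h \<in> clsh (gammaT d)" unfolding h_def using e by (intro clsh_plus clsh_base fg) auto
  define g where "g = nextop T dA a h"
  have gl: "g \<in> loT T dA (gammaT d)" unfolding loT_def g_def using hc by blast
  have Fb: "\<forall>f\<in>loT T dA (gammaT d). \<forall>x. 0 \<le> f x \<and> f x \<le> 1" by (rule loT_bnd)
  have hb: "\<forall>x. 0 \<le> h x \<and> h x \<le> 1" using clsh_bnd[OF hc gammaT_bnd] .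
  have "min (1 - dA a a) (h y) \<in> {min (1 - dA b a) (h x') | b x'. (x1, b, x') \<in> T}" using tr by blast
  then have "min (1 - dA a a) (h y) \<le> g x1" unfolding g_def nextop_def
  proof (intro sup01_ub[where B=1])
    show "\<forall>s\<in>{min (1 - dA b a) (h x') | b x'. (x1, b, x') \<in> T}. s \<le> 1"
    proof
      fix s assume "s \<in> {min (1 - dA b a) (h x') | b x'. (x1, b, x') \<in> T}"
      then obtain b x' where "s = min (1 - dA b a) (h x')" by blast
      then show "s \<le> 1" using hb metric01D(1)[OF dA, of b a] by (simp add: min_def)
    qed
  qed
  moreover have "h y \<le> 1" using hb by blast
  ultimately have "h y \<le> g x1" using metric01D(3)[OF dA] by (simp add: min_def split: if_splits)
  also have "g x1 \<le> ftilde g X1" using x1 gl Fb by (intro ftilde_ub) auto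
  finally have g1: "h y \<le> ftilde g X1" .
  have g2: "ftilde g X2 \<le> 1 - e"
  proof (rule ftilde_le)
    show "0 \<le> 1 - e" using e by simp
    show "\<forall>x2\<in>X2. g x2 \<le> 1 - e"
    proof
      fix x2 assume x2: "x2 \<in> X2"
      show "g x2 \<le> 1 - e" unfolding g_def nextop_def
      proof (rule sup01_le)
        show "0 \<le> 1 - e" using e by simp
        show "\<forall>s\<in>{min (1 - dA b a) (h x') | b x'. (x2, b, x') \<in> T}. s \<le> 1 - e"
        proof
          fix s assume "s \<in> {min (1 - dA b a) (h x') | b x'. (x2, b, x') \<in> T}"
          then obtain b y2 where s: "s = min (1 - dA b a) (h y2)" "(x2, b, y2) \<in> T" by blast
          show "s \<le> 1 - e"
          proof (cases "dA b a < e")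
            case True
            then have "y2 \<in> W" using x2 s(2) unfolding W_def by blast
            then have "f y2 = 0" unfolding f_def using sub0 by auto
            then have "h y2 = 1 - e" unfolding h_def oplus01_def using e by auto
            then show ?thesis using s by auto
          next
            case False then show ?thesis using s by auto
          qed
        qed
      qed
    qed
  qed
  have "ominus01 (ftilde g X1) (ftilde g X2) \<le> betaT T dA d X1 X2"
    unfolding betaT_def by (rule alphaT_ub[OF gl Fb])
  moreover have "min e (f y) \<le> ominus01 (ftilde g X1) (ftilde g X2)"
    using g1 g2 unfolding h_def oplus01_def ominus01_def by auto
  ultimately show ?thesis unfolding f_def W_def by simp
qed

end


lemma clsh_prop:
  assumes "h \<in> clsh G" "\<forall>g\<in>G. (\<forall>x. 0 \<le> g x \<and> g x \<le> 1) \<and> g y \<le> ftilde g Y + e" "Y \<noteq> {}" "0 \<le> e"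
  shows "(\<forall>x. 0 \<le> h x \<and> h x \<le> 1) \<and> h y \<le> ftilde h Y + e"
  using assms(1)
proof (induction rule: clsh.induct)
  case (clsh_base f) then show ?case using assms(2) by blast
next
  case (clsh_minus f c)
  let ?h = "\<lambda>x. ominus01 (f x) c"
  have fb: "\<forall>x. 0 \<le> f x \<and> f x \<le> 1" and fy: "f y \<le> ftilde f Y + e" using clsh_minus.IH by auto
  have hb: "\<forall>x. 0 \<le> ?h x \<and> ?h x \<le> 1"
  proof
    fix x have "0 \<le> f x" "f x \<le> 1" using fb by auto
    then show "0 \<le> ?h x \<and> ?h x \<le> 1" using clsh_minus.hyps by (simp add: ominus01_def)
  qed
  have h0: "0 \<le> ftilde ?h Y" using ftilde_bnd[OF hb] by blast
  have "ftilde f Y \<le> ftilde ?h Y + c"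
  proof (rule ftilde_le)
    show "0 \<le> ftilde ?h Y + c" using h0 clsh_minus.hyps by simp
    show "\<forall>y\<in>Y. f y \<le> ftilde ?h Y + c"
    proof
      fix z assume "z \<in> Y"
      then have "?h z \<le> ftilde ?h Y" using hb by (intro ftilde_ub) auto
      then show "f z \<le> ftilde ?h Y + c" unfolding ominus01_def by simp
    qed
  qed
  then have "?h y \<le> ftilde ?h Y + e" using fy h0 assms(4) unfolding ominus01_def by simp
  then show ?case using hb by blast
next
  case (clsh_plus f c)
  let ?h = "\<lambda>x. oplus01 (f x) c"
  have fb: "\<forall>x. 0 \<le> f x \<and> f x \<le> 1" and fy: "f y \<le> ftilde f Y + e" using clsh_plus.IH by auto
  have hb: "\<forall>x. 0 \<le> ?h x \<and> ?h x \<le> 1"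
  proof
    fix x have "0 \<le> f x" "f x \<le> 1" using fb by auto
    then show "0 \<le> ?h x \<and> ?h x \<le> 1" using clsh_plus.hyps by (simp add: oplus01_def)
  qed
  have "?h y \<le> ftilde ?h Y + e"
  proof (cases "1 \<le> ftilde ?h Y")
    case True
    have "?h y \<le> 1" using hb by blast
    then show ?thesis using True assms(4) by simp
  next
    case False
    obtain y0 where y0: "y0 \<in> Y" using assms(3) by auto
    have hY: "?h z \<le> ftilde ?h Y" if "z \<in> Y" for z using that hb by (intro ftilde_ub) auto
    have eq: "?h z = f z + c" if "z \<in> Y" for z using hY[OF that] False unfolding oplus01_def by auto
    have "0 \<le> f y0" using fb by blast
    then have "c \<le> ftilde ?h Y" using hY[OF y0] eq[OF y0] by linarith
    have "ftilde f Y \<le> ftilde ?h Y - c"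
    proof (rule ftilde_le)
      show "0 \<le> ftilde ?h Y - c" using \<open>c \<le> ftilde ?h Y\<close> by simp
      show "\<forall>y\<in>Y. f y \<le> ftilde ?h Y - c" using hY eq by force
    qed
    then show ?thesis using fy unfolding oplus01_def by simp
  qed
  then show ?case using hb by blast
qed

context
  fixes T :: "('x \<times> 'a \<times> 'x) set" and dA :: "'a \<Rightarrow> 'a \<Rightarrow> real" and d0 :: "'x \<Rightarrow> 'x \<Rightarrow> real"
  assumes dA: "metric01 dA" and d0: "d0 \<in> DPMet"
begin

lemma step_witness:
  assumes "y2 \<in> {y2. \<exists>x2\<in>X2. \<exists>b. (x2, b, y2) \<in> T \<and> dA b a < e}"
    and "tpath T y2 \<tau>' x2'" "dTr dA \<sigma>' \<tau>' \<le> e" "d0 x1' x2' \<le> e"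
  shows "\<exists>x2\<in>X2. \<exists>x2' \<tau>. tpath T x2 \<tau> x2' \<and> dTr dA (a # \<sigma>') \<tau> \<le> e \<and> d0 x1' x2' \<le> e"
proof -
  obtain x2 b where x2: "x2 \<in> X2" "(x2, b, y2) \<in> T" "dA b a < e" using assms(1) by blast
  have "dTr dA (a # \<sigma>') (b # \<tau>') \<le> e"
    using x2(3) assms(3) metric01D(4)[OF dA, of a b] by (intro dTr_cons_le) auto
  moreover have "tpath T x2 (b # \<tau>') x2'" using x2(2) assms(2) by (rule tpath_cons)
  ultimately show ?thesis using x2(1) assms(4) by blast
qed

lemma delta_le_beta: "delta T dA d0 X1 X2 \<le> beta_d0 T dA d0 (delta T dA d0) X1 X2"
proof -
  let ?m = "beta_d0 T dA d0 (delta T dA d0) X1 X2"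
  have mb: "0 \<le> ?m" "?m \<le> 1" using beta_bnd[OF dA d0] by auto
  show ?thesis
  proof (rule delta_le[OF dA d0 _ mb(1)])
    fix e assume e: "?m < e" "e \<le> 1"
    have e0: "0 < e" using e mb by linarith
    show "good T dA d0 X1 X2 e" unfolding good_def
    proof (intro ballI allI impI)
      fix x1 x1' \<sigma> assume x1: "x1 \<in> X1" and p: "tpath T x1 \<sigma> x1'"
      show "\<exists>x2\<in>X2. \<exists>x2' \<tau>. tpath T x2 \<tau> x2' \<and> dTr dA \<sigma> \<tau> \<le> e \<and> d0 x1' x2' \<le> e"
      proof (cases \<sigma>)
        case Nil
        then have x1': "x1' = x1" using p tpath_nil_inv by metis
        have "inf01 ((\<lambda>v. d0 x1 v) ` X2) \<le> hausdorff_dir d0 X1 X2" by (rule haus_ub[OF dA d0 x1])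
        also have "\<dots> \<le> ?m" unfolding beta_d0_def by simp
        finally have "inf01 ((\<lambda>v. d0 x1 v) ` X2) < e" using e by simp
        then obtain x2 where x2: "x2 \<in> X2" "d0 x1 x2 < e" using inf01_less[OF _ e(2)] by auto
        have "tpath T x2 [] x2" by (rule tpath_nil)
        then show ?thesis using x2 Nil x1' e0 by (intro bexI[of _ x2] exI[of _ x2] exI[of _ "[]"]) auto
      next
        case (Cons a \<sigma>')
        then obtain y where y: "(x1, a, y) \<in> T" "tpath T y \<sigma>' x1'" using p tpath_cons_inv by metis
        define W where "W = {y2. \<exists>x2\<in>X2. \<exists>b. (x2, b, y2) \<in> T \<and> dA b a < e}"
        have "min e (delta T dA d0 {y} W) \<le> betaT T dA (delta T dA d0) X1 X2"
          unfolding W_def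
          by (rule keyL[OF dA d0 delta_DPMet[OF dA d0] delta_decomp[OF dA d0] delta_sub0[OF dA d0] x1 y(1) e0 e(2)])
        also have "\<dots> \<le> ?m" unfolding beta_d0_def by simp
        finally have "delta T dA d0 {y} W < e" using e by (simp add: min_def split: if_splits)
        then have "good T dA d0 {y} W e" using delta_lt[OF dA d0] e(2) by auto
        then obtain y2 x2' \<tau>' where w: "y2 \<in> W" "tpath T y2 \<tau>' x2'" "dTr dA \<sigma>' \<tau>' \<le> e" "d0 x1' x2' \<le> e"
          using y(2) unfolding good_def by blast
        show ?thesis unfolding Cons by (rule step_witness[OF w(1)[unfolded W_def] w(2-4)])
      qed
    qed
  qed
qed

lemma fix_ge:
  assumes d: "d \<in> DPMet" and fx: "beta_d0 T dA d0 d = d"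
  shows "delta T dA d0 X1 X2 \<le> d X1 X2"
proof -
  have dec: "d X W = sup01 ((\<lambda>z. d {z} W) ` X)" for X W
  proof -
    have "beta_d0 T dA d0 d X W = sup01 ((\<lambda>z. beta_d0 T dA d0 d {z} W) ` X)" by (rule beta_decomp[OF dA d0])
    then show ?thesis by (simp add: fx)
  qed
  have sub0: "d X W = 0" if "X \<subseteq> W" for X W
  proof -
    have "beta_d0 T dA d0 d X W = 0" by (rule beta_sub0[OF dA d0 that])
    then show ?thesis by (simp add: fx)
  qed
  have bet: "betaT T dA d X1 X2 \<le> d X1 X2" "hausdorff_dir d0 X1 X2 \<le> d X1 X2" for X1 X2
  proof -
    have "max (betaT T dA d X1 X2) (hausdorff_dir d0 X1 X2) = d X1 X2"
      using fun_cong[OF fun_cong[OF fx, of X1], of X2] unfolding beta_d0_def by simp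
    then show "betaT T dA d X1 X2 \<le> d X1 X2" "hausdorff_dir d0 X1 X2 \<le> d X1 X2" by auto
  qed
  have main: "\<forall>X1 X2 e. x1 \<in> X1 \<longrightarrow> d X1 X2 < e \<longrightarrow> e \<le> 1 \<longrightarrow>
      (\<exists>x2\<in>X2. \<exists>x2' \<tau>. tpath T x2 \<tau> x2' \<and> dTr dA \<sigma> \<tau> \<le> e \<and> d0 x1' x2' \<le> e)"
    if "tpath T x1 \<sigma> x1'" for x1 \<sigma> x1'
    using that
  proof (induction rule: tpath.induct)
    case (tpath_nil x)
    show ?case
    proof (intro allI impI)
      fix X1 X2 e assume x: "x \<in> X1" and de: "d X1 X2 < e" and e1: "e \<le> 1"
      have e0: "0 \<le> e" using de DPMetD(1)[OF d, of X1 X2] by simp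
      have "inf01 ((\<lambda>v. d0 x v) ` X2) \<le> hausdorff_dir d0 X1 X2" by (rule haus_ub[OF dA d0 x])
      also have "\<dots> \<le> d X1 X2" by (rule bet(2))
      finally have "inf01 ((\<lambda>v. d0 x v) ` X2) < e" using de by simp
      then obtain x2 where x2: "x2 \<in> X2" "d0 x x2 < e" using inf01_less[OF _ e1] by auto
      have "tpath T x2 [] x2" by (rule tpath_nil)
      then show "\<exists>x2\<in>X2. \<exists>x2' \<tau>. tpath T x2 \<tau> x2' \<and> dTr dA [] \<tau> \<le> e \<and> d0 x x2' \<le> e"
        using x2 e0 by (intro bexI[of _ x2] exI[of _ x2] exI[of _ "[]"]) auto
    qed
  next
    case (tpath_cons x a y \<sigma> z)
    show ?case
    proof (intro allI impI)
      fix X1 X2 e assume x: "x \<in> X1" and de: "d X1 X2 < e" and e1: "e \<le> 1"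
      have e0: "0 < e" using de DPMetD(1)[OF d, of X1 X2] by simp
      define W where "W = {y2. \<exists>x2\<in>X2. \<exists>b. (x2, b, y2) \<in> T \<and> dA b a < e}"
      have "min e (d {y} W) \<le> betaT T dA d X1 X2"
        unfolding W_def by (rule keyL[OF dA d0 d dec sub0 x tpath_cons.hyps(1) e0 e1])
      also have "\<dots> \<le> d X1 X2" by (rule bet(1))
      finally have "d {y} W < e" using de by (simp add: min_def split: if_splits)
      then obtain y2 x2' \<tau>' where w: "y2 \<in> W" "tpath T y2 \<tau>' x2'" "dTr dA \<sigma> \<tau>' \<le> e" "d0 z x2' \<le> e"
        using tpath_cons.IH e1 by blast
      show "\<exists>x2\<in>X2. \<exists>x2' \<tau>. tpath T x2 \<tau> x2' \<and> dTr dA (a # \<sigma>) \<tau> \<le> e \<and> d0 z x2' \<le> e"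
        by (rule step_witness[OF w(1)[unfolded W_def] w(2-4)])
    qed
  qed
  show ?thesis
  proof (rule delta_le[OF dA d0])
    fix e assume "d X1 X2 < e" "e \<le> 1"
    then show "good T dA d0 X1 X2 e" unfolding good_def using main by blast
  next
    show "0 \<le> d X1 X2" using DPMetD(1)[OF d] .
  qed
qed

end


context
  fixes T :: "('x \<times> 'a \<times> 'x) set" and dA :: "'a \<Rightarrow> 'a \<Rightarrow> real" and d0 :: "'x \<Rightarrow> 'x \<Rightarrow> real"
  assumes dA: "metric01 dA" and d0: "d0 \<in> DPMet"
begin

lemma haus_le_delta: "hausdorff_dir d0 X1 X2 \<le> delta T dA d0 X1 X2"
proof (rule delta_ge[OF dA d0])
  show "hausdorff_dir d0 X1 X2 \<le> 1" using haus_bnd[OF dA d0] by blast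
  fix e assume e: "0 \<le> e" "e \<le> 1" "good T dA d0 X1 X2 e"
  show "hausdorff_dir d0 X1 X2 \<le> e"
  proof (cases "e < 1")
    case False then show ?thesis using haus_bnd[OF dA d0, of X1 X2] e by simp
  next
    case True
    show ?thesis unfolding hausdorff_dir_def
    proof (rule sup01_le[OF _ e(1)])
      show "\<forall>s\<in>(\<lambda>u. inf01 ((\<lambda>v. d0 u v) ` X2)) ` X1. s \<le> e"
      proof
        fix s assume "s \<in> (\<lambda>u. inf01 ((\<lambda>v. d0 u v) ` X2)) ` X1"
        then obtain u where u: "u \<in> X1" "s = inf01 ((\<lambda>v. d0 u v) ` X2)" by auto
        have "tpath T u [] u" by (rule tpath_nil)
        then obtain x2 x2' \<tau> where w: "x2 \<in> X2" "tpath T x2 \<tau> x2'" "dTr dA [] \<tau> \<le> e" "d0 u x2' \<le> e"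
          using e(3) u(1) unfolding good_def by blast
        have "\<tau> = []" using dTr_nil_D[OF w(3) True] .
        then have "x2' = x2" using w(2) tpath_nil_inv by metis
        have "s \<le> d0 u x2" unfolding u(2) using w(1) DPMetD(1)[OF d0] by (intro inf01_lb) auto
        then show "s \<le> e" using w(4) \<open>x2' = x2\<close> by simp
      qed
    qed
  qed
qed

lemma betaT_le_delta: "betaT T dA (delta T dA d0) X1 X2 \<le> delta T dA d0 X1 X2"
  unfolding betaT_def
proof (rule alphaT_le)
  let ?D = "delta T dA d0"
  let ?F = "loT T dA (gammaT ?D)"
  have Fb: "\<forall>f\<in>?F. \<forall>x. 0 \<le> f x \<and> f x \<le> 1" by (rule loT_bnd[OF dA d0])
  show "0 \<le> ?D X1 X2" using delta_bnd[OF dA d0] by blast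
  show "\<forall>f\<in>?F. ominus01 (ftilde f X1) (ftilde f X2) \<le> ?D X1 X2"
  proof
    fix f assume f: "f \<in> ?F"
    have fb: "\<forall>x. 0 \<le> f x \<and> f x \<le> 1" using f Fb by blast
    have fX1: "0 \<le> ftilde f X1 \<and> ftilde f X1 \<le> 1" and fX2: "0 \<le> ftilde f X2 \<and> ftilde f X2 \<le> 1"
      using ftilde_bnd[OF fb] by auto
    show "ominus01 (ftilde f X1) (ftilde f X2) \<le> ?D X1 X2"
    proof (rule delta_ge[OF dA d0])
      show "ominus01 (ftilde f X1) (ftilde f X2) \<le> 1" using fX1 fX2 by (simp add: ominus01_def)
      fix e assume e: "0 \<le> e" "e \<le> 1" and g: "good T dA d0 X1 X2 e"
      show "ominus01 (ftilde f X1) (ftilde f X2) \<le> e"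
      proof (cases "e < 1")
        case False then show ?thesis using fX1 fX2 e by (simp add: ominus01_def)
      next
        case True
        have f_cases: "f = (\<lambda>_. 1) \<or> (\<exists>a h. f = nextop T dA a h \<and> h \<in> clsh (gammaT ?D))"
          using f unfolding loT_def by auto
        then show ?thesis
        proof
          assume f1: "f = (\<lambda>_. 1)"
          show ?thesis
          proof (cases "X1 = {}")
            case True
            then have "ftilde f X1 = 0" by (simp add: ftilde_def sup01_def)
            then show ?thesis using e fX2 by (simp add: ominus01_def)
          next
            case False
            then obtain x1 where x1: "x1 \<in> X1" by auto
            have "tpath T x1 [] x1" by (rule tpath_nil)
            then obtain x2 where "x2 \<in> X2" using g x1 unfolding good_def by blast
            then have "f x2 \<le> ftilde f X2" using fb by (intro ftilde_ub) auto
            then have "1 \<le> ftilde f X2" using f1 by simp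
            then show ?thesis using fX1 e by (simp add: ominus01_def)
          qed
        next
          assume "\<exists>a h. f = nextop T dA a h \<and> h \<in> clsh (gammaT ?D)"
          then obtain a h where ah: "f = nextop T dA a h" "h \<in> clsh (gammaT ?D)" by blast
          have hb: "\<forall>x. 0 \<le> h x \<and> h x \<le> 1" by (rule clsh_bnd[OF ah(2) gammaT_bnd])
          have "ftilde f X1 \<le> ftilde f X2 + e"
          proof (rule ftilde_le)
            show "0 \<le> ftilde f X2 + e" using fX2 e by simp
            show "\<forall>x1\<in>X1. f x1 \<le> ftilde f X2 + e"
            proof
              fix x1 assume x1: "x1 \<in> X1"
              have "nextop T dA a h x1 \<le> ftilde f X2 + e" unfolding nextop_def
              proof (rule sup01_le)
                show "0 \<le> ftilde f X2 + e" using fX2 e by simp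
                show "\<forall>s\<in>{min (1 - dA b a) (h x') | b x'. (x1, b, x') \<in> T}. s \<le> ftilde f X2 + e"
                proof
                  fix s assume "s \<in> {min (1 - dA b a) (h x') | b x'. (x1, b, x') \<in> T}"
                  then obtain b y where s: "s = min (1 - dA b a) (h y)" and tr: "(x1, b, y) \<in> T" by blast
                  define Y2 where "Y2 = {y2. \<exists>x2\<in>X2. \<exists>b'. (x2, b', y2) \<in> T \<and> dA b b' \<le> e}"
                  have gY: "good T dA d0 {y} Y2 e" unfolding good_def
                  proof (intro ballI allI impI)
                    fix y0 x1' \<sigma>' assume "y0 \<in> {y}" "tpath T y0 \<sigma>' x1'"
                    then have "tpath T x1 (b # \<sigma>') x1'" using tr by (auto intro: tpath_cons)
                    then obtain x2 x2' \<tau> where w: "x2 \<in> X2" "tpath T x2 \<tau> x2'" "dTr dA (b # \<sigma>') \<tau> \<le> e" "d0 x1' x2' \<le> e"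
                      using g x1 unfolding good_def by blast
                    obtain b' \<tau>' where \<tau>: "\<tau> = b' # \<tau>'" using w(3) True by (cases \<tau>) auto
                    obtain y2 where y2: "(x2, b', y2) \<in> T" "tpath T y2 \<tau>' x2'" using w(2) \<tau> tpath_cons_inv by metis
                    have "dA b b' \<le> e \<and> dTr dA \<sigma>' \<tau>' \<le> e" using dTr_cons_D w(3) \<tau> True by metis
                    then have "y2 \<in> Y2" unfolding Y2_def using w(1) y2(1) by blast
                    then show "\<exists>x2\<in>Y2. \<exists>x2' \<tau>. tpath T x2 \<tau> x2' \<and> dTr dA \<sigma>' \<tau> \<le> e \<and> d0 x1' x2' \<le> e"
                      using y2(2) \<open>dA b b' \<le> e \<and> dTr dA \<sigma>' \<tau>' \<le> e\<close> w(4) by blast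
                  qed
                  have Y2ne: "Y2 \<noteq> {}"
                  proof -
                    have "tpath T y [] y" by (rule tpath_nil)
                    then show ?thesis using gY unfolding good_def by blast
                  qed
                  have dY: "?D {y} Y2 \<le> e" by (rule delta_le_good[OF dA d0 gY e])
                  have "\<forall>g\<in>gammaT ?D. (\<forall>x. 0 \<le> g x \<and> g x \<le> 1) \<and> g y \<le> ftilde g Y2 + e"
                  proof
                    fix g assume gg: "g \<in> gammaT ?D"
                    then have "ominus01 (ftilde g {y}) (ftilde g Y2) \<le> ?D {y} Y2" unfolding gammaT_def by blast
                    then have "g y \<le> ftilde g Y2 + e" using dY unfolding ominus01_def by simp
                    moreover have "\<forall>x. 0 \<le> g x \<and> g x \<le> 1" using gg unfolding gammaT_def by blast
                    ultimately show "(\<forall>x. 0 \<le> g x \<and> g x \<le> 1) \<and> g y \<le> ftilde g Y2 + e" by blast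
                  qed
                  then have hy: "h y \<le> ftilde h Y2 + e" using clsh_prop[OF ah(2) _ Y2ne e(1)] by blast
                  define c where "c = 1 - dA b a - e"
                  have A: "min c (h y2) \<le> ftilde f X2" if y2in: "y2 \<in> Y2" for y2
                  proof -
                    obtain x2 b' where x2: "x2 \<in> X2" "(x2, b', y2) \<in> T" "dA b b' \<le> e" using y2in unfolding Y2_def by blast
                    have "dA b' a \<le> dA b' b + dA b a" by (rule metric01D(5)[OF dA])
                    then have "c \<le> 1 - dA b' a" using x2(3) metric01D(4)[OF dA, of b b'] unfolding c_def by simp
                    then have "min c (h y2) \<le> min (1 - dA b' a) (h y2)" by simp
                    also have "\<dots> \<le> nextop T dA a h x2" unfolding nextop_def
                    proof (rule sup01_ub[where B=1])
                      show "min (1 - dA b' a) (h y2) \<in> {min (1 - dA b a) (h x') | b x'. (x2, b, x') \<in> T}"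
                        using x2(2) by blast
                      show "\<forall>s\<in>{min (1 - dA b a) (h x') | b x'. (x2, b, x') \<in> T}. s \<le> 1"
                      proof
                        fix s assume "s \<in> {min (1 - dA b a) (h x') | b x'. (x2, b, x') \<in> T}"
                        then obtain bb xx where "s = min (1 - dA bb a) (h xx)" by blast
                        then show "s \<le> 1" using hb metric01D(1)[OF dA, of bb a] by (simp add: min_def)
                      qed
                    qed
                    also have "\<dots> \<le> ftilde f X2" unfolding ah(1)[symmetric] using x2(1) fb by (intro ftilde_ub) auto
                    finally show ?thesis .
                  qed
                  have B: "min c (ftilde h Y2) \<le> ftilde f X2"
                  proof (cases "ftilde h Y2 \<le> c")
                    case True
                    have "ftilde h Y2 \<le> ftilde f X2"
                    proof (rule ftilde_le)
                      show "0 \<le> ftilde f X2" using fX2 by simp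
                      show "\<forall>y\<in>Y2. h y \<le> ftilde f X2"
                      proof
                        fix z assume z: "z \<in> Y2"
                        have "h z \<le> ftilde h Y2" using z hb by (intro ftilde_ub) auto
                        then have "h z = min c (h z)" using True by simp
                        then show "h z \<le> ftilde f X2" using A[OF z] by simp
                      qed
                    qed
                    then show ?thesis by simp
                  next
                    case False
                    show ?thesis
                    proof (cases "c < 0")
                      case True
                      have "min c (ftilde h Y2) \<le> c" by simp
                      then show ?thesis using fX2 True by linarith
                    next
                      case False2: False
                      have "c < sup01 (h ` Y2)" using False unfolding ftilde_def by simp
                      then obtain v where "v \<in> h ` Y2" "c < v" using sup01_less False2 by fastforce
                      then obtain z where z: "z \<in> Y2" "c < h z" by blast
                      then have "c \<le> ftilde f X2" using A[OF z(1)] by simp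
                      then show ?thesis by simp
                    qed
                  qed
                  have "s \<le> min c (ftilde h Y2) + e" using hy unfolding s c_def by (simp add: min_def)
                  then show "s \<le> ftilde f X2 + e" using B by simp
                qed
              qed
              then show "f x1 \<le> ftilde f X2 + e" using ah(1) by simp
            qed
          qed
          then show ?thesis using e unfolding ominus01_def by simp
        qed
      qed
    qed
  qed
qed

lemma delta_fix: "beta_d0 T dA d0 (delta T dA d0) = delta T dA d0"
proof (intro ext antisym)
  fix X1 X2
  show "delta T dA d0 X1 X2 \<le> beta_d0 T dA d0 (delta T dA d0) X1 X2" by (rule delta_le_beta[OF dA d0])
  show "beta_d0 T dA d0 (delta T dA d0) X1 X2 \<le> delta T dA d0 X1 X2"
    unfolding beta_d0_def using haus_le_delta betaT_le_delta by simp
qed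

lemma lfp_delta: "dp_lfp (beta_d0 T dA d0) = delta T dA d0"
  unfolding dp_lfp_def
proof (rule the_equality)
  have C: "\<forall>d'\<in>DPMet. beta_d0 T dA d0 d' = d' \<longrightarrow> delta T dA d0 \<le> d'"
    using fix_ge[OF dA d0] by (auto simp: le_fun_def)
  show "delta T dA d0 \<in> DPMet \<and> beta_d0 T dA d0 (delta T dA d0) = delta T dA d0 \<and>
    (\<forall>d'\<in>DPMet. beta_d0 T dA d0 d' = d' \<longrightarrow> delta T dA d0 \<le> d')"
    using delta_DPMet[OF dA d0] delta_fix C by blast
  fix d assume d: "d \<in> DPMet \<and> beta_d0 T dA d0 d = d \<and> (\<forall>d'\<in>DPMet. beta_d0 T dA d0 d' = d' \<longrightarrow> d \<le> d')"
  then have "d \<le> delta T dA d0" using delta_DPMet[OF dA d0] delta_fix by blast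
  moreover have "delta T dA d0 \<le> d" using C d by blast
  ultimately show "d = delta T dA d0" by (rule antisym)
qed

end

theorem mainTheorem5:
  fixes T :: "('x \<times> 'a \<times> 'x) set" and dA :: "'a \<Rightarrow> 'a \<Rightarrow> real"
    and d0 :: "'x \<Rightarrow> 'x \<Rightarrow> real" and X1 X2 :: "'x set"
  assumes "metric01 dA" and "d0 \<in> DPMet"
  shows "dp_lfp (beta_d0 T dA d0) X1 X2 =
    inf01 {\<epsilon>. 0 \<le> \<epsilon> \<and> \<epsilon> \<le> 1 \<and>
      (\<forall>x1\<in>X1. \<forall>x1' \<sigma>. tpath T x1 \<sigma> x1' \<longrightarrow>
         (\<exists>x2\<in>X2. \<exists>x2' \<tau>. tpath T x2 \<tau> x2' \<and> dTr dA \<sigma> \<tau> \<le> \<epsilon> \<and> d0 x1' x2' \<le> \<epsilon>))}"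
  using lfp_delta[OF assms] unfolding delta_def good_def by simp

end
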